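(* Let $T$ be a locally compact Hausdorff space, $\tau : T\to T$ a proper local homeomorphism, and $(C_0(T),\alpha,L)$ the associated Exel system. For every ideal $I$ of $C_0(T)\rtimes_{\alpha,L}\mathbb{N}$, the set $$Y_I := \{t\in T : f(t) = 0 \text{ for all } f\in C_0(T) \text{ such that } k_A(f)\in I\}$$ is a closed invariant subset of $T$.
   Context: A subset $Y\subset T$ is invariant if $\tau(Y)\subset Y$ and $\tau^{-1}(Y)\subset Y$. The associated Exel system is $(C_0(T),\alpha,L)$ with $\alpha(f) = f\circ\tau$ and $L(f)(t) = |\tau^{-1}(t)|^{-1}\sum_{\tau(s)=t} f(s)$. $M_L$ is the Hilbert $C_0(T)$-module completion of $C_0(T)$ with right action $g\cdot f = g\alpha(f)$, inner product $\langle g,h\rangle_L = L(\bar gh)$, left action $\phi$ by multiplication. The crossed product $C_0(T)\rtimes_{\alpha,L}\mathbb{N}$ is (identified with) the Cuntz–Pimsner algebra $\mathcal{O}(M_L)$: the C*-algebra generated by a universal pair $(k_{M_L},k_A)$, with $k_{M_L} : M_L\to\mathcal{O}(M_L)$ linear and $k_A : C_0(T)\to\mathcal{O}(M_L)$ a homomorphism, satisfying $k_{M_L}(x\cdot a) = k_{M_L}(x)k_A(a)$, $k_{M_L}(x)^*k_{M_L}(y) = k_A(\langle x,y\rangle_L)$, $k_{M_L}(a\cdot x) = k_A(a)k_{M_L}(x)$, and $(k_{M_L},k_A)^{(1)}(\phi(f)) = k_A(f)$ for all $f\in C_0(T)$, where $(k_{M_L},k_A)^{(1)}$ is the homomorphism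 on compact operators with $\Theta_{x,y}\mapsto k_{M_L}(x)k_{M_L}(y)^*$, $\Theta_{x,y}(z) = x\cdot\langle y,z\rangle_L$. *)

theory Defs
  imports "HOL-Analysis.Analysis"
begin

class cstar_algebra = real_normed_algebra + banach +
  fixes scaleC :: "complex \<Rightarrow> 'a \<Rightarrow> 'a"
    and cstar :: "'a \<Rightarrow> 'a"
  assumes scaleC_add_right: "scaleC c (a + b) = scaleC c a + scaleC c b"
    and scaleC_add_left: "scaleC (c + d) a = scaleC c a + scaleC d a"
    and scaleC_scaleC: "scaleC c (scaleC d a) = scaleC (c * d) a"
    and scaleC_one: "scaleC 1 a = a"
    and scaleR_scaleC: "scaleR r a = scaleC (of_real r) a"
    and scaleC_mult_left: "scaleC c a * b = scaleC c (a * b)"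
    and scaleC_mult_right: "a * scaleC c b = scaleC c (a * b)"
    and norm_scaleC: "norm (scaleC c a) = cmod c * norm a"
    and cstar_add: "cstar (a + b) = cstar a + cstar b"
    and cstar_scaleC: "cstar (scaleC c a) = scaleC (cnj c) (cstar a)"
    and cstar_cstar: "cstar (cstar a) = a"
    and cstar_mult: "cstar (a * b) = cstar b * cstar a"
    and cstar_identity: "norm (cstar a * a) = (norm a)\<^sup>2"

definition cstar_ideal :: "'b::cstar_algebra set \<Rightarrow> bool" where
  "cstar_ideal I \<longleftrightarrow> closed I \<and> 0 \<in> I \<and>
     (\<forall>a\<in>I. \<forall>b\<in>I. a + b \<in> I) \<and> (\<forall>c. \<forall>a\<in>I. scaleC c a \<in> I) \<and>
     (\<forall>a\<in>I. \<forall>b. b * a \<in> I \<and> a * b \<in> I)"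

definition cstar_subalgebra :: "'b::cstar_algebra set \<Rightarrow> bool" where
  "cstar_subalgebra S \<longleftrightarrow> closed S \<and> 0 \<in> S \<and>
     (\<forall>a\<in>S. \<forall>b\<in>S. a + b \<in> S \<and> a * b \<in> S) \<and> (\<forall>c. \<forall>a\<in>S. scaleC c a \<in> S) \<and>
     (\<forall>a\<in>S. cstar a \<in> S)"

definition star_hom :: "('b::cstar_algebra \<Rightarrow> 'c::cstar_algebra) \<Rightarrow> bool" where
  "star_hom h \<longleftrightarrow> (\<forall>a b c. h (a + b) = h a + h b \<and> h (scaleC c a) = scaleC c (h a) \<and>
      h (a * b) = h a * h b \<and> h (cstar a) = cstar (h a))"

definition C0 :: "('a::topological_space \<Rightarrow> complex) set" where
  "C0 = {f. continuous_on UNIV f \<and> (\<forall>e>0. compact {t. e \<le> cmod (f t)})}"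

definition proper_local_homeo :: "('a::topological_space \<Rightarrow> 'a) \<Rightarrow> bool" where
  "proper_local_homeo \<tau> \<longleftrightarrow> continuous_on UNIV \<tau> \<and>
     (\<forall>K. compact K \<longrightarrow> compact (\<tau> -` K)) \<and>
     (\<forall>t. \<exists>U. open U \<and> t \<in> U \<and> open (\<tau> ` U) \<and> (\<exists>g. homeomorphism U (\<tau> ` U) \<tau> g))"

definition exel_alpha :: "('a \<Rightarrow> 'a) \<Rightarrow> ('a \<Rightarrow> complex) \<Rightarrow> ('a \<Rightarrow> complex)" where
  "exel_alpha \<tau> f = f \<circ> \<tau>"

definition exel_L :: "('a \<Rightarrow> 'a) \<Rightarrow> ('a \<Rightarrow> complex) \<Rightarrow> ('a \<Rightarrow> complex)" where
  "exel_L \<tau> f = (\<lambda>t. (\<Sum>s\<in>\<tau> -` {t}. f s) / of_nat (card (\<tau> -` {t})))"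

text \<open>The pre-Hilbert module structure on C0(T) whose completion is M_L.\<close>
definition ModL_rmul :: "('a \<Rightarrow> 'a) \<Rightarrow> ('a \<Rightarrow> complex) \<Rightarrow> ('a \<Rightarrow> complex) \<Rightarrow> ('a \<Rightarrow> complex)" where
  "ModL_rmul \<tau> g f = (\<lambda>s. g s * exel_alpha \<tau> f s)"

definition ModL_lmul :: "('a \<Rightarrow> complex) \<Rightarrow> ('a \<Rightarrow> complex) \<Rightarrow> ('a \<Rightarrow> complex)" where
  "ModL_lmul f g = (\<lambda>s. f s * g s)"

definition ModL_ip :: "('a \<Rightarrow> 'a) \<Rightarrow> ('a \<Rightarrow> complex) \<Rightarrow> ('a \<Rightarrow> complex) \<Rightarrow> ('a \<Rightarrow> complex)" where
  "ModL_ip \<tau> g h = exel_L \<tau> (\<lambda>s. cnj (g s) * h s)"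

definition sup_norm :: "('a \<Rightarrow> complex) \<Rightarrow> real" where
  "sup_norm f = Sup (insert 0 (range (\<lambda>t. cmod (f t))))"

definition ModL_norm :: "('a \<Rightarrow> 'a) \<Rightarrow> ('a \<Rightarrow> complex) \<Rightarrow> real" where
  "ModL_norm \<tau> g = sqrt (sup_norm (ModL_ip \<tau> g g))"

definition Theta :: "('a \<Rightarrow> 'a) \<Rightarrow> ('a \<Rightarrow> complex) \<Rightarrow> ('a \<Rightarrow> complex) \<Rightarrow> ('a \<Rightarrow> complex) \<Rightarrow> ('a \<Rightarrow> complex)" where
  "Theta \<tau> x y z = ModL_rmul \<tau> x (ModL_ip \<tau> y z)"

definition Theta_sum :: "('a \<Rightarrow> 'a) \<Rightarrow> (('a \<Rightarrow> complex) \<times> ('a \<Rightarrow> complex)) list \<Rightarrow> ('a \<Rightarrow> complex) \<Rightarrow> ('a \<Rightarrow> complex)" where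
  "Theta_sum \<tau> F z = (\<lambda>s. sum_list (map (\<lambda>(x, y). Theta \<tau> x y z s) F))"

text \<open>Operator norm on M_L of phi(f) - sum Theta_{x_i,y_i}, computed on the dense subspace C0(T).\<close>
definition op_dist :: "('a::topological_space \<Rightarrow> 'a) \<Rightarrow> ('a \<Rightarrow> complex) \<Rightarrow> (('a \<Rightarrow> complex) \<times> ('a \<Rightarrow> complex)) list \<Rightarrow> real" where
  "op_dist \<tau> f F = Sup {ModL_norm \<tau> (\<lambda>s. ModL_lmul f z s - Theta_sum \<tau> F z s) | z. z \<in> C0 \<and> ModL_norm \<tau> z \<le> 1}"

text \<open>Image of sum Theta_{x_i,y_i} under (k_M,k_A)^(1).\<close>
definition theta_image :: "(('a \<Rightarrow> complex) \<Rightarrow> 'b::cstar_algebra) \<Rightarrow> (('a \<Rightarrow> complex) \<times> ('a \<Rightarrow> complex)) list \<Rightarrow> 'b" where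
  "theta_image kM F = sum_list (map (\<lambda>(x, y). kM x * cstar (kM y)) F)"

text \<open>Covariant (Cuntz--Pimsner) pair for M_L, with k_M given on the dense subspace C0(T) of M_L.\<close>
definition CP_covariant ::
  "('a::topological_space \<Rightarrow> 'a) \<Rightarrow> (('a \<Rightarrow> complex) \<Rightarrow> 'b::cstar_algebra) \<Rightarrow> (('a \<Rightarrow> complex) \<Rightarrow> 'b) \<Rightarrow> bool" where
  "CP_covariant \<tau> kM kA \<longleftrightarrow>
     (\<forall>f\<in>C0. \<forall>g\<in>C0. \<forall>c.
        kA (\<lambda>t. f t + g t) = kA f + kA g \<and> kA (\<lambda>t. c * f t) = scaleC c (kA f) \<and>
        kA (\<lambda>t. f t * g t) = kA f * kA g \<and> kA (\<lambda>t. cnj (f t)) = cstar (kA f) \<and>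
        kM (\<lambda>t. f t + g t) = kM f + kM g \<and> kM (\<lambda>t. c * f t) = scaleC c (kM f)) \<and>
     (\<forall>x\<in>C0. \<forall>a\<in>C0. kM (ModL_rmul \<tau> x a) = kM x * kA a) \<and>
     (\<forall>x\<in>C0. \<forall>y\<in>C0. cstar (kM x) * kM y = kA (ModL_ip \<tau> x y)) \<and>
     (\<forall>a\<in>C0. \<forall>x\<in>C0. kM (ModL_lmul a x) = kA a * kM x) \<and>
     (\<forall>f\<in>C0. \<forall>F :: nat \<Rightarrow> (('a \<Rightarrow> complex) \<times> ('a \<Rightarrow> complex)) list.
        (\<forall>n. set (F n) \<subseteq> C0 \<times> C0) \<longrightarrow> (\<lambda>n. op_dist \<tau> f (F n)) \<longlonglongrightarrow> 0 \<longrightarrow>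
        (\<lambda>n. theta_image kM (F n)) \<longlonglongrightarrow> kA f)"

text \<open>(B, k_M, k_A) is the Cuntz--Pimsner algebra O(M_L) = C0(T) x_{alpha,L} N:
  generated by a covariant pair, universal among covariant pairs (into C*-algebras of type 'c).\<close>
definition is_exel_crossed_product ::
  "'c::cstar_algebra itself \<Rightarrow> ('a::topological_space \<Rightarrow> 'a) \<Rightarrow> (('a \<Rightarrow> complex) \<Rightarrow> 'b::cstar_algebra) \<Rightarrow> (('a \<Rightarrow> complex) \<Rightarrow> 'b) \<Rightarrow> bool" where
  "is_exel_crossed_product _ \<tau> kM kA \<longleftrightarrow>
     CP_covariant \<tau> kM kA \<and>
     (\<forall>S. cstar_subalgebra S \<and> kM ` C0 \<subseteq> S \<and> kA ` C0 \<subseteq> S \<longrightarrow> S = UNIV) \<and>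
     (\<forall>(\<psi> :: ('a \<Rightarrow> complex) \<Rightarrow> 'c) \<pi>. CP_covariant \<tau> \<psi> \<pi> \<longrightarrow>
        (\<exists>h. star_hom h \<and> (\<forall>x\<in>C0. h (kM x) = \<psi> x) \<and> (\<forall>a\<in>C0. h (kA a) = \<pi> a)))"

definition tau_invariant :: "('a \<Rightarrow> 'a) \<Rightarrow> 'a set \<Rightarrow> bool" where
  "tau_invariant \<tau> Y \<longleftrightarrow> \<tau> ` Y \<subseteq> Y \<and> \<tau> -` Y \<subseteq> Y"

end

theory Submission
  imports Defs
begin

lemma C0_cont: "f \<in> C0 \<Longrightarrow> continuous_on UNIV f" by (simp add: C0_def)

lemma C0_mult:
  assumes "f \<in> C0" "g \<in> C0"
  shows "(\<lambda>t. f t * g t) \<in> C0"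
proof -
  have cf: "continuous_on UNIV f" and cg: "continuous_on UNIV g" using assms by (auto simp: C0_def)
  have "continuous_on UNIV (\<lambda>t. f t * g t)" using cf cg by (intro continuous_intros)
  moreover have "compact {t. e \<le> cmod (f t * g t)}" if e: "e > 0" for e
  proof -
    have sub: "{t. e \<le> cmod (f t * g t)} \<subseteq> {t. sqrt e \<le> cmod (f t)} \<union> {t. sqrt e \<le> cmod (g t)}"
    proof
      fix t assume "t \<in> {t. e \<le> cmod (f t * g t)}"
      hence h: "e \<le> cmod (f t) * cmod (g t)" by (simp add: norm_mult)
      show "t \<in> {t. sqrt e \<le> cmod (f t)} \<union> {t. sqrt e \<le> cmod (g t)}"
      proof (rule ccontr)
        assume "t \<notin> {t. sqrt e \<le> cmod (f t)} \<union> {t. sqrt e \<le> cmod (g t)}"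
        hence a: "cmod (f t) < sqrt e" "cmod (g t) < sqrt e" by auto
        have "cmod (f t) * cmod (g t) < sqrt e * sqrt e"
          using a by (intro mult_strict_mono') auto
        with h e show False by simp
      qed
    qed
    have c1: "compact ({t. sqrt e \<le> cmod (f t)} \<union> {t. sqrt e \<le> cmod (g t)})"
      using assms e by (auto simp: C0_def intro!: compact_Un)
    have cl: "closed {t. e \<le> cmod (f t * g t)}"
      using cf cg by (intro closed_Collect_le continuous_intros) auto
    have "{t. e \<le> cmod (f t * g t)} = ({t. sqrt e \<le> cmod (f t)} \<union> {t. sqrt e \<le> cmod (g t)}) \<inter> {t. e \<le> cmod (f t * g t)}"
      using sub by blast
    then show ?thesis using compact_Int_closed[OF c1 cl] by simp
  qed
  ultimately show ?thesis by (simp add: C0_def)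
qed

lemma C0_cnj: "f \<in> C0 \<Longrightarrow> (\<lambda>t. cnj (f t)) \<in> C0"
  by (auto simp: C0_def intro!: continuous_intros)

lemma C0_scale: assumes "f \<in> C0" shows "(\<lambda>t. c * f t) \<in> C0"
proof (cases "c = 0")
  case True
  have "compact {t::'a. e \<le> 0}" if "e > 0" for e::real using that by simp
  then show ?thesis using True by (auto simp: C0_def)
next
  case False
  have "continuous_on UNIV (\<lambda>t. c * f t)" using assms by (auto simp: C0_def intro!: continuous_intros)
  moreover have "compact {t. e \<le> cmod (c * f t)}" if "e > 0" for e
  proof -
    have "{t. e \<le> cmod (c * f t)} = {t. e / cmod c \<le> cmod (f t)}"
      using False by (auto simp: norm_mult field_simps)
    then show ?thesis using assms that False by (simp add: C0_def)
  qed
  ultimately show ?thesis by (simp add: C0_def)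
qed

lemma C0_comp:
  assumes "f \<in> C0" "proper_local_homeo \<tau>"
  shows "(\<lambda>t. f (\<tau> t)) \<in> C0"
proof -
  have ct: "continuous_on UNIV \<tau>" and pr: "\<And>K. compact K \<Longrightarrow> compact (\<tau> -` K)"
    using assms(2) by (auto simp: proper_local_homeo_def)
  have "continuous_on UNIV (\<lambda>t. f (\<tau> t))"
    using continuous_on_compose[of UNIV \<tau> f] ct assms(1)
    by (auto simp: C0_def o_def intro: continuous_on_subset)
  moreover have "compact {t. e \<le> cmod (f (\<tau> t))}" if "e > 0" for e
    using pr[of "{t. e \<le> cmod (f t)}"] assms(1) that by (auto simp: C0_def vimage_def)
  ultimately show ?thesis by (simp add: C0_def)
qed

lemma C0_zero: "(\<lambda>t. 0) \<in> C0"
  by (auto simp: C0_def)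


lemma Hausdorff_t2: "Hausdorff_space (euclidean :: 'a::t2_space topology)"
  unfolding Hausdorff_space_def disjnt_def
proof (intro allI impI)
  fix x y :: 'a assume "x \<in> topspace euclidean \<and> y \<in> topspace euclidean \<and> x \<noteq> y"
  then have "x \<noteq> y" by blast
  then obtain U V where UV: "open U" "open V" "x \<in> U" "y \<in> V" "U \<inter> V = {}" using separation_t2[of x y] by blast
  show "\<exists>U V. openin euclidean U \<and> openin euclidean V \<and> x \<in> U \<and> y \<in> V \<and> U \<inter> V = {}"
    by (intro exI[of _ U] exI[of _ V]) (simp add: UV open_openin[symmetric])
qed

lemma bump:
  fixes W :: "'a::t2_space set"
  assumes lc: "locally_compact_space (euclidean :: 'a topology)" and "open W" "t \<in> W"
  obtains w :: "'a \<Rightarrow> real" and K where "continuous_on UNIV w" "w t = 1" "compact K" "K \<subseteq> W"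
    "\<And>s. s \<notin> K \<Longrightarrow> w s = 0" "(\<lambda>s. complex_of_real (w s)) \<in> C0"
proof -
  have "locally_compact_space (euclidean :: 'a topology) = neighbourhood_base_of (compactin euclidean) (euclidean :: 'a topology)"
    by (rule locally_compact_space_neighbourhood_base) (simp add: Hausdorff_t2)
  with lc have nb: "neighbourhood_base_of (compactin euclidean) (euclidean :: 'a topology)" by simp
  then obtain U K where U: "open U" "compact K" "t \<in> U" "U \<subseteq> K" "K \<subseteq> W"
  proof -
    have "openin euclidean W \<and> t \<in> W" using assms(2,3) by (simp add: open_openin[symmetric])
    then have "\<exists>U K. openin euclidean U \<and> compactin euclidean K \<and> t \<in> U \<and> U \<subseteq> K \<and> K \<subseteq> W"
      using nb unfolding neighbourhood_base_of by (elim allE[of _ W] allE[of _ t]) (erule mp)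
    then obtain U K where "openin euclidean U" "compactin euclidean K" "t \<in> U" "U \<subseteq> K" "K \<subseteq> W"
      by blast
    then show ?thesis by (intro that[of U K]) (simp_all add: compactin_euclidean_iff open_openin[symmetric])
  qed
  have cr: "completely_regular_space (euclidean :: 'a topology)"
    by (rule locally_compact_regular_imp_completely_regular_space[OF lc]) (simp add: Hausdorff_t2)
  have "closedin euclidean (- U)" using U by (simp add: closed_closedin[symmetric] open_closed[symmetric])
  moreover have "t \<in> topspace euclidean - (- U)" using U by simp
  ultimately have "closedin euclidean (- U) \<and> t \<in> topspace euclidean - (- U)" by blast
  from cr[unfolded completely_regular_space_def, rule_format, OF this]
  obtain f :: "'a \<Rightarrow> real" where f: "continuous_map euclidean (top_of_set {0..1}) f" "f t = 0" "f ` (- U) \<subseteq> {1}"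
    by blast
  have "continuous_map euclidean euclidean f" using f(1) by (simp add: continuous_map_in_subtopology)
  then have cf: "continuous_on UNIV f" by (simp add: continuous_map_iff_continuous2)
  define w where "w = (\<lambda>s. 1 - f s)"
  have cw: "continuous_on UNIV w" unfolding w_def using cf by (intro continuous_intros)
  have w0: "w s = 0" if "s \<notin> K" for s
  proof -
    have "s \<in> - U" using that U(4) by blast
    then have "f s \<in> {1}" using f(3) by blast
    then show ?thesis by (simp add: w_def)
  qed
  have "(\<lambda>s. complex_of_real (w s)) \<in> C0"
  proof -
    have "continuous_on UNIV (\<lambda>s. complex_of_real (w s))" by (intro continuous_intros cw)
    moreover have "compact {s. e \<le> cmod (complex_of_real (w s))}" if "e > 0" for e
    proof -
      have cl: "closed {s. e \<le> cmod (complex_of_real (w s))}"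
        by (rule closed_Collect_le[OF continuous_on_const]) (intro continuous_intros cw)
      have eq: "{s. e \<le> cmod (complex_of_real (w s))} = K \<inter> {s. e \<le> cmod (complex_of_real (w s))}"
      proof (intro equalityI subsetI)
        fix s assume h: "s \<in> {s. e \<le> cmod (complex_of_real (w s))}"
        have "s \<in> K"
        proof (rule ccontr)
          assume "s \<notin> K"
          then have "w s = 0" by (rule w0)
          with h that show False by simp
        qed
        then show "s \<in> K \<inter> {s. e \<le> cmod (complex_of_real (w s))}" using h by (rule IntI)
      next
        fix s assume "s \<in> K \<inter> {s. e \<le> cmod (complex_of_real (w s))}"
        then show "s \<in> {s. e \<le> cmod (complex_of_real (w s))}" by (rule IntD2)
      qed
      from compact_Int_closed[OF U(2) cl] show ?thesis by (simp only: eq[symmetric])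
    qed
    ultimately show ?thesis by (simp add: C0_def)
  qed
  moreover have "w t = 1" using f(2) by (simp add: w_def)
  ultimately show ?thesis by (intro that[of w K] cw w0 U(2) U(5))
qed


lemma homeo_inj:
  assumes "homeomorphism U V f g" shows "inj_on f U"
  by (rule inj_on_inverseI[where g=g]) (rule homeomorphism_apply1[OF assms])

lemma homeo_open_image:
  assumes h: "homeomorphism U (\<tau> ` U) \<tau> g" and oU: "open (\<tau> ` U)" and oX: "open X" and XU: "X \<subseteq> U"
  shows "open (\<tau> ` X)"
proof -
  have cg: "continuous_on (\<tau> ` U) g" using h by (simp add: homeomorphism_def)
  have eq: "\<tau> ` X = \<tau> ` U \<inter> g -` X"
  proof (intro equalityI subsetI)
    fix y assume "y \<in> \<tau> ` X"
    then obtain x where x: "x \<in> X" "y = \<tau> x" by (rule imageE)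
    have xU: "x \<in> U" using x(1) XU by (rule subsetD[rotated])
    have "g (\<tau> x) = x" by (rule homeomorphism_apply1[OF h xU])
    then show "y \<in> \<tau> ` U \<inter> g -` X" using x xU by simp
  next
    fix y assume y: "y \<in> \<tau> ` U \<inter> g -` X"
    then have "y \<in> \<tau> ` U" by simp
    then have "\<tau> (g y) = y" by (rule homeomorphism_apply2[OF h])
    moreover have "g y \<in> X" using y by simp
    ultimately show "y \<in> \<tau> ` X" by (intro image_eqI[of y \<tau> "g y"]) simp_all
  qed
  have "\<forall>B. open B \<longrightarrow> open (\<tau> ` U \<inter> g -` B)"
    using cg by (simp add: continuous_on_open_vimage[OF oU] Int_commute)
  then have "open (\<tau> ` U \<inter> g -` X)" using oX by simp
  then show ?thesis by (simp only: eq)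
qed

lemma fiber_finite:
  fixes \<tau> :: "'a::t2_space \<Rightarrow> 'a"
  assumes plh: "proper_local_homeo \<tau>"
  shows "finite (\<tau> -` {v})"
proof -
  have cP: "compact (\<tau> -` {v})" using plh by (simp add: proper_local_homeo_def)
  have ex: "\<forall>t. \<exists>U. open U \<and> t \<in> U \<and> open (\<tau> ` U) \<and> (\<exists>g. homeomorphism U (\<tau> ` U) \<tau> g)"
    using plh by (simp add: proper_local_homeo_def)
  obtain U where U: "\<forall>t. open (U t) \<and> t \<in> U t \<and> open (\<tau> ` U t) \<and> (\<exists>g. homeomorphism (U t) (\<tau> ` U t) \<tau> g)"
    using choice[OF ex] by blast
  have inj: "inj_on \<tau> (U t)" for t
  proof -
    obtain g where "homeomorphism (U t) (\<tau> ` U t) \<tau> g" using U by blast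
    then show ?thesis by (rule homeo_inj)
  qed
  have "\<forall>t\<in>\<tau> -` {v}. open (U t)" using U by blast
  moreover have "\<tau> -` {v} \<subseteq> \<Union> (U ` (\<tau> -` {v}))" using U by blast
  ultimately obtain K where K: "K \<subseteq> \<tau> -` {v}" "finite K" "\<tau> -` {v} \<subseteq> \<Union> (U ` K)"
    using compactE_image[OF cP] by metis
  have "\<tau> -` {v} \<subseteq> K"
  proof
    fix x assume x: "x \<in> \<tau> -` {v}"
    then obtain k where k: "k \<in> K" "x \<in> U k" using K(3) by blast
    have "k \<in> U k" using U by blast
    moreover have "\<tau> x = \<tau> k" using x k K(1) by auto
    ultimately have "x = k" using inj[of k] k(2) by (simp add: inj_on_def)
    then show "x \<in> K" using k by simp
  qed
  then show ?thesis using K(2) by (rule finite_subset)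
qed

lemma finite_separation:
  fixes P :: "'a::t2_space set"
  assumes "finite P"
  shows "\<exists>Ob. (\<forall>u\<in>P. open (Ob u) \<and> u \<in> Ob u) \<and> (\<forall>u\<in>P. \<forall>u'\<in>P. u \<noteq> u' \<longrightarrow> Ob u \<inter> Ob u' = {})"
proof -
  define S where "S x y = (SOME AB. open (fst AB) \<and> open (snd AB) \<and> x \<in> fst AB \<and> y \<in> snd AB \<and> fst AB \<inter> snd AB = {})" for x y :: 'a
  have S0: "open (fst (S x y)) \<and> open (snd (S x y)) \<and> x \<in> fst (S x y) \<and> y \<in> snd (S x y) \<and> fst (S x y) \<inter> snd (S x y) = {}"
    if xy: "x \<noteq> y" for x y
  proof -
    obtain A B where "open A" "open B" "x \<in> A" "y \<in> B" "A \<inter> B = {}" using hausdorff[OF xy] by blast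
    then have "\<exists>AB. open (fst AB) \<and> open (snd AB) \<and> x \<in> fst AB \<and> y \<in> snd AB \<and> fst AB \<inter> snd AB = {}"
      by (intro exI[of _ "(A, B)"]) simp
    then show ?thesis unfolding S_def by (rule someI_ex)
  qed
  have S1: "open (fst (S x y))" "open (snd (S x y))" "x \<in> fst (S x y)" "y \<in> snd (S x y)" "fst (S x y) \<inter> snd (S x y) = {}"
    if "x \<noteq> y" for x y
    using S0[OF that] by simp_all
  define Ob where "Ob u = (\<Inter>u'\<in>P - {u}. fst (S u u') \<inter> snd (S u' u))" for u
  have A: "open (Ob u) \<and> u \<in> Ob u" if "u \<in> P" for u
  proof
    have "\<forall>u'\<in>P - {u}. open (fst (S u u') \<inter> snd (S u' u))"
    proof
      fix u' assume "u' \<in> P - {u}"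
      then have "u \<noteq> u'" by auto
      then show "open (fst (S u u') \<inter> snd (S u' u))" using S1[of u u'] S1[of u' u] by (intro open_Int) simp_all
    qed
    then show "open (Ob u)" unfolding Ob_def
      using assms by (intro open_INT) simp_all
    have "\<forall>u'\<in>P - {u}. u \<in> fst (S u u') \<inter> snd (S u' u)"
    proof
      fix u' assume "u' \<in> P - {u}"
      then have "u \<noteq> u'" by auto
      then show "u \<in> fst (S u u') \<inter> snd (S u' u)" using S1[of u u'] S1[of u' u] by simp
    qed
    then show "u \<in> Ob u" unfolding Ob_def by blast
  qed
  have B: "Ob u \<inter> Ob u' = {}" if "u \<in> P" "u' \<in> P" "u \<noteq> u'" for u u'
  proof -
    have "u' \<in> P - {u}" "u \<in> P - {u'}" using that by simp_all
    then have "Ob u \<subseteq> fst (S u u')" "Ob u' \<subseteq> snd (S u u')" unfolding Ob_def by (auto dest: INT_D)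
    moreover have "fst (S u u') \<inter> snd (S u u') = {}" using S1 that(3) by simp
    ultimately show ?thesis by blast
  qed
  show ?thesis by (intro exI[of _ Ob] conjI ballI impI A B) simp_all
qed


lemma lc_nbhd:
  fixes W :: "'a::t2_space set"
  assumes lc: "locally_compact_space (euclidean :: 'a topology)" and "open W" "t \<in> W"
  obtains U K where "open U" "compact K" "t \<in> U" "U \<subseteq> K" "K \<subseteq> W"
proof -
  have "locally_compact_space (euclidean :: 'a topology) = neighbourhood_base_of (compactin euclidean) (euclidean :: 'a topology)"
    by (rule locally_compact_space_neighbourhood_base) (simp add: Hausdorff_t2)
  with lc have nb: "neighbourhood_base_of (compactin euclidean) (euclidean :: 'a topology)" by simp
  have "openin euclidean W \<and> t \<in> W" using assms(2,3) by (simp add: open_openin[symmetric])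
  then have "\<exists>U K. openin euclidean U \<and> compactin euclidean K \<and> t \<in> U \<and> U \<subseteq> K \<and> K \<subseteq> W"
    using nb unfolding neighbourhood_base_of by (elim allE[of _ W] allE[of _ t]) (erule mp)
  then obtain U K where "openin euclidean U" "compactin euclidean K" "t \<in> U" "U \<subseteq> K" "K \<subseteq> W"
    by blast
  then show ?thesis by (intro that[of U K]) (simp_all add: compactin_euclidean_iff open_openin[symmetric])
qed

lemma fiber_local:
  fixes \<tau> :: "'a::t2_space \<Rightarrow> 'a"
  assumes lc: "locally_compact_space (euclidean :: 'a topology)" and plh: "proper_local_homeo \<tau>"
  obtains U g W where "open U" "open (\<tau> ` U)" "homeomorphism U (\<tau> ` U) \<tau> g" "open W" "t \<in> W" "W \<subseteq> U"
    "\<And>s. s \<in> W \<Longrightarrow> card (\<tau> -` {\<tau> s}) = card (\<tau> -` {\<tau> t})"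
proof -
  define v where "v = \<tau> t"
  define P where "P = \<tau> -` {v}"
  have finP: "finite P" unfolding P_def using plh by (rule fiber_finite)
  have tP: "t \<in> P" by (simp add: P_def v_def)
  have ct: "continuous_on UNIV \<tau>" and pr: "\<And>K. compact K \<Longrightarrow> compact (\<tau> -` K)"
    using plh by (auto simp: proper_local_homeo_def)
  have ex: "\<forall>x. \<exists>Ug. open (fst Ug) \<and> x \<in> fst Ug \<and> open (\<tau> ` fst Ug) \<and> homeomorphism (fst Ug) (\<tau> ` fst Ug) \<tau> (snd Ug)"
  proof
    fix x
    obtain U where "open U" "x \<in> U" "open (\<tau> ` U)" "\<exists>g. homeomorphism U (\<tau> ` U) \<tau> g"
      using plh unfolding proper_local_homeo_def by blast
    then obtain g where "open U" "x \<in> U" "open (\<tau> ` U)" "homeomorphism U (\<tau> ` U) \<tau> g" by blast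
    then show "\<exists>Ug. open (fst Ug) \<and> x \<in> fst Ug \<and> open (\<tau> ` fst Ug) \<and> homeomorphism (fst Ug) (\<tau> ` fst Ug) \<tau> (snd Ug)"
      by (intro exI[of _ "(U, g)"]) simp
  qed
  define UG where "UG x = (SOME Ug. open (fst Ug) \<and> x \<in> fst Ug \<and> open (\<tau> ` fst Ug) \<and> homeomorphism (fst Ug) (\<tau> ` fst Ug) \<tau> (snd Ug))" for x
  define Uf where "Uf x = fst (UG x)" for x
  define gf where "gf x = snd (UG x)" for x
  have UG: "open (Uf x) \<and> x \<in> Uf x \<and> open (\<tau> ` Uf x) \<and> homeomorphism (Uf x) (\<tau> ` Uf x) \<tau> (gf x)" for x
    unfolding Uf_def gf_def UG_def using ex[rule_format, of x] by (rule someI_ex)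
  have injU: "inj_on \<tau> (Uf x)" for x
  proof -
    have "homeomorphism (Uf x) (\<tau> ` Uf x) \<tau> (gf x)" using UG[of x] by (elim conjE)
    then show ?thesis by (rule homeo_inj)
  qed
  obtain Ob where Ob: "\<forall>u\<in>P. open (Ob u) \<and> u \<in> Ob u" "\<forall>u\<in>P. \<forall>u'\<in>P. u \<noteq> u' \<longrightarrow> Ob u \<inter> Ob u' = {}"
    using finite_separation[OF finP] by (elim exE conjE)
  define Wf where "Wf u = Uf u \<inter> Ob u" for u
  have Wf_open: "open (Wf u)" if "u \<in> P" for u unfolding Wf_def using UG[of u] Ob(1) that by blast
  have Wf_in: "u \<in> Wf u" if "u \<in> P" for u unfolding Wf_def using UG[of u] Ob(1) that by blast
  have Wf_sub: "Wf u \<subseteq> Uf u" for u unfolding Wf_def by blast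
  have Wf_img: "open (\<tau> ` Wf u)" if "u \<in> P" for u
  proof -
    have h: "homeomorphism (Uf u) (\<tau> ` Uf u) \<tau> (gf u)" and o: "open (\<tau> ` Uf u)" using UG[of u] by auto
    show ?thesis by (rule homeo_open_image[OF h o Wf_open[OF that] Wf_sub])
  qed
  have Wf_disj: "Wf u \<inter> Wf u' = {}" if "u \<in> P" "u' \<in> P" "u \<noteq> u'" for u u'
  proof -
    have "Ob u \<inter> Ob u' = {}" using Ob(2) that by blast
    then show ?thesis unfolding Wf_def by blast
  qed
  have injW: "inj_on \<tau> (Wf u)" for u using injU[of u] Wf_sub[of u] by (rule inj_on_subset)
  obtain N C where NC: "open N" "compact C" "v \<in> N" "N \<subseteq> C"
    by (rule lc_nbhd[where t=v and W=UNIV, OF lc open_UNIV UNIV_I])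
  define Q where "Q = \<tau> -` C \<inter> - (\<Union>u\<in>P. Wf u)"
  have "closed (- (\<Union>u\<in>P. Wf u))" using Wf_open by (intro closed_Compl open_UN) simp
  then have cQ: "compact Q" unfolding Q_def using pr[OF NC(2)] by (rule compact_Int_closed[rotated])
  have "compact (\<tau> ` Q)" using continuous_on_subset[OF ct subset_UNIV] cQ by (rule compact_continuous_image)
  then have clQ: "closed (\<tau> ` Q)" by (rule compact_imp_closed)
  have vQ: "v \<notin> \<tau> ` Q"
  proof
    assume "v \<in> \<tau> ` Q"
    then obtain x where x: "x \<in> Q" "v = \<tau> x" by blast
    then have "x \<in> P" by (simp add: P_def)
    then have "x \<in> Wf x" by (rule Wf_in)
    then show False using x(1) \<open>x \<in> P\<close> unfolding Q_def by blast
  qed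
  define V where "V = N \<inter> (\<Inter>u\<in>P. \<tau> ` Wf u) \<inter> - (\<tau> ` Q)"
  have oV: "open V" unfolding V_def using NC(1) finP Wf_img clQ by (intro open_Int open_INT) auto
  define W where "W = Wf t \<inter> \<tau> -` V"
  have oW: "open W" unfolding W_def using Wf_open[OF tP] oV ct by (intro open_Int open_vimage) simp_all
  have "v \<in> V" unfolding V_def using NC(3) vQ Wf_in by (auto simp: P_def)
  then have tW: "t \<in> W" unfolding W_def using Wf_in[OF tP] v_def by simp
  have card: "card (\<tau> -` {\<tau> s}) = card (\<tau> -` {\<tau> t})" if sW: "s \<in> W" for s
  proof -
    define v' where "v' = \<tau> s"
    have v'V: "v' \<in> V" using sW unfolding W_def v'_def by simp
    have vN: "v' \<in> N" and vQ': "v' \<notin> \<tau> ` Q" and vW: "\<And>u. u \<in> P \<Longrightarrow> v' \<in> \<tau> ` Wf u"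
      using v'V unfolding V_def by auto
    have eq: "\<tau> -` {v'} = (\<Union>u\<in>P. Wf u \<inter> \<tau> -` {v'})"
    proof (intro equalityI subsetI)
      fix x assume x: "x \<in> \<tau> -` {v'}"
      then have tx: "\<tau> x = v'" by simp
      then have "\<tau> x \<in> C" using vN NC(4) by blast
      moreover have "\<tau> x \<notin> \<tau> ` Q" using tx vQ' by simp
      ultimately have "x \<in> (\<Union>u\<in>P. Wf u)" unfolding Q_def by blast
      then show "x \<in> (\<Union>u\<in>P. Wf u \<inter> \<tau> -` {v'})" using x by blast
    qed blast
    have one: "card (Wf u \<inter> \<tau> -` {v'}) = 1" if uP: "u \<in> P" for u
    proof -
      have "v' \<in> \<tau> ` Wf u" using vW[OF uP] .
      then obtain x where x: "x \<in> Wf u" "\<tau> x = v'" by blast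
      have "Wf u \<inter> \<tau> -` {v'} = {x}"
      proof (intro equalityI subsetI)
        fix y assume "y \<in> Wf u \<inter> \<tau> -` {v'}"
        then have "y \<in> Wf u" "\<tau> y = \<tau> x" using x by auto
        then show "y \<in> {x}" using injW[of u] x(1) by (simp add: inj_on_def)
      qed (use x in blast)
      then show ?thesis by simp
    qed
    have "card (\<Union>u\<in>P. Wf u \<inter> \<tau> -` {v'}) = (\<Sum>u\<in>P. card (Wf u \<inter> \<tau> -` {v'}))"
    proof (rule card_UN_disjoint[OF finP])
      show "\<forall>u\<in>P. finite (Wf u \<inter> \<tau> -` {v'})"
      proof
        fix u assume "u \<in> P" then have "card (Wf u \<inter> \<tau> -` {v'}) = 1" by (rule one)
        then show "finite (Wf u \<inter> \<tau> -` {v'})" by (intro card_ge_0_finite) simp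
      qed
      show "\<forall>u\<in>P. \<forall>u'\<in>P. u \<noteq> u' \<longrightarrow> (Wf u \<inter> \<tau> -` {v'}) \<inter> (Wf u' \<inter> \<tau> -` {v'}) = {}"
        using Wf_disj by blast
    qed
    then have "card (\<tau> -` {v'}) = (\<Sum>u\<in>P. card (Wf u \<inter> \<tau> -` {v'}))" by (simp only: eq[symmetric])
    also have "\<dots> = (\<Sum>u\<in>P. 1)" using one by (rule sum.cong[OF refl])
    also have "\<dots> = card P" by simp
    finally have "card (\<tau> -` {v'}) = card P" .
    then show ?thesis by (simp only: v'_def P_def v_def)
  qed
  have WU: "W \<subseteq> Uf t" unfolding W_def using Wf_sub[of t] by blast
  have u1: "open (Uf t)" "open (\<tau> ` Uf t)" "homeomorphism (Uf t) (\<tau> ` Uf t) \<tau> (gf t)"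
    using UG[of t] by auto
  show ?thesis by (rule that[of "Uf t" "gf t" W, OF u1 oW tW WU card])
qed


lemma sum_fiber_single:
  assumes inj: "inj_on \<tau> W" and sW: "s \<in> W" and fin: "finite (\<tau> -` {\<tau> s})"
    and k0: "\<And>u. u \<notin> W \<Longrightarrow> k u = 0"
  shows "(\<Sum>u\<in>\<tau> -` {\<tau> s}. k u) = (k s :: complex)"
proof -
  have "s \<in> \<tau> -` {\<tau> s}" by simp
  then have "(\<Sum>u\<in>\<tau> -` {\<tau> s}. k u) = k s + (\<Sum>u\<in>\<tau> -` {\<tau> s} - {s}. k u)"
    using fin by (intro sum.remove)
  also have "(\<Sum>u\<in>\<tau> -` {\<tau> s} - {s}. k u) = 0"
  proof (rule sum.neutral, rule ballI)
    fix u assume u: "u \<in> \<tau> -` {\<tau> s} - {s}"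
    have "u \<notin> W"
    proof
      assume "u \<in> W"
      moreover have "\<tau> u = \<tau> s" using u by simp
      ultimately have "u = s" using inj sW by (simp add: inj_on_def)
      then show False using u by simp
    qed
    then show "k u = 0" by (rule k0)
  qed
  finally show ?thesis by simp
qed

lemma sum_fiber_zero:
  assumes k0: "\<And>u. u \<notin> W \<Longrightarrow> k u = 0" and v: "v \<notin> \<tau> ` W"
  shows "(\<Sum>u\<in>\<tau> -` {v}. k u) = (0 :: complex)"
proof (rule sum.neutral, rule ballI)
  fix u assume "u \<in> \<tau> -` {v}"
  then have "\<tau> u = v" by simp
  then have "u \<notin> W" using v by blast
  then show "k u = 0" by (rule k0)
qed

lemma L_local:
  fixes \<tau> :: "'a::t2_space \<Rightarrow> 'a"
  assumes oU: "open (\<tau> ` U)" and h: "homeomorphism U (\<tau> ` U) \<tau> g"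
    and oW: "open W" and WU: "W \<subseteq> U"
    and card: "\<And>s. s \<in> W \<Longrightarrow> card (\<tau> -` {\<tau> s}) = N" and Npos: "N > 0"
    and ck: "continuous_on UNIV k" and cK: "compact K" and KW: "K \<subseteq> W"
    and k0: "\<And>u. u \<notin> K \<Longrightarrow> k u = 0"
    and ct: "continuous_on UNIV \<tau>"
  shows "exel_L \<tau> k \<in> C0" and "\<And>s. s \<in> W \<Longrightarrow> exel_L \<tau> k (\<tau> s) = k s / of_nat N"
proof -
  have injW: "inj_on \<tau> W" using homeo_inj[OF h] WU by (rule inj_on_subset)
  have kW: "k u = 0" if "u \<notin> W" for u using that KW k0 by blast
  have val: "exel_L \<tau> k (\<tau> s) = k s / of_nat N" if sW: "s \<in> W" for s
  proof -
    have cs: "card (\<tau> -` {\<tau> s}) = N" using card[OF sW] .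
    then have fin: "finite (\<tau> -` {\<tau> s})" using Npos by (intro card_ge_0_finite) simp
    have "(\<Sum>u\<in>\<tau> -` {\<tau> s}. k u) = k s" by (rule sum_fiber_single[OF injW sW fin kW])
    then show ?thesis by (simp add: exel_L_def cs)
  qed
  then show "\<And>s. s \<in> W \<Longrightarrow> exel_L \<tau> k (\<tau> s) = k s / of_nat N" .
  define hh where "hh v = (if v \<in> \<tau> ` W then k (g v) / of_nat N else 0)" for v
  have eqh: "exel_L \<tau> k v = hh v" for v
  proof (cases "v \<in> \<tau> ` W")
    case True
    then obtain s where s: "s \<in> W" "v = \<tau> s" by blast
    have "g v = s" using homeomorphism_apply1[OF h] s WU by blast
    then show ?thesis using val[OF s(1)] s True by (simp add: hh_def)
  next
    case False
    have "(\<Sum>u\<in>\<tau> -` {v}. k u) = 0" by (rule sum_fiber_zero[OF kW False])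
    then show ?thesis using False by (simp add: exel_L_def hh_def)
  qed
  have eqL: "exel_L \<tau> k = hh" using eqh by (rule ext)
  have oTW: "open (\<tau> ` W)" by (rule homeo_open_image[OF h oU oW WU])
  have "compact (\<tau> ` K)" using continuous_on_subset[OF ct subset_UNIV] cK by (rule compact_continuous_image)
  then have clK: "closed (\<tau> ` K)" by (rule compact_imp_closed)
  have hh0: "hh v = 0" if "v \<notin> \<tau> ` K" for v
  proof (cases "v \<in> \<tau> ` W")
    case True
    then obtain s where s: "s \<in> W" "v = \<tau> s" by blast
    have "g v = s" using homeomorphism_apply1[OF h] s WU by blast
    then have "g v \<notin> K" using that s by blast
    then show ?thesis using True by (simp add: hh_def k0)
  next
    case False then show ?thesis by (simp add: hh_def)
  qed
  have cg: "continuous_on (\<tau> ` W) g"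
    using h by (simp add: homeomorphism_def) (meson WU continuous_on_subset image_mono)
  have c1: "continuous_on (\<tau> ` W) hh"
  proof -
    have "continuous_on (\<tau> ` W) (\<lambda>v. k (g v) / of_nat N)"
      using continuous_on_compose2[OF ck cg subset_UNIV] by (intro continuous_intros) (simp_all add: Npos)
    then show ?thesis by (rule continuous_on_cong[THEN iffD1, rotated 2]) (simp_all add: hh_def)
  qed
  have c2: "continuous_on (- (\<tau> ` K)) hh"
  proof -
    have "continuous_on (- (\<tau> ` K)) (\<lambda>v. 0::complex)" by (rule continuous_on_const)
    then show ?thesis by (rule continuous_on_cong[THEN iffD1, rotated 2]) (simp_all add: hh0)
  qed
  have U: "\<tau> ` W \<union> - (\<tau> ` K) = UNIV" using KW by blast
  have chh: "continuous_on UNIV hh"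
    using continuous_on_open_Un[OF oTW _ c1 c2] clK U by (simp add: open_Compl)
  have "compact {v. e \<le> cmod (hh v)}" if e: "e > 0" for e
  proof -
    have cl: "closed {v. e \<le> cmod (hh v)}"
      by (rule closed_Collect_le[OF continuous_on_const]) (intro continuous_intros chh)
    have eq: "{v. e \<le> cmod (hh v)} = \<tau> ` K \<inter> {v. e \<le> cmod (hh v)}"
    proof (intro equalityI subsetI)
      fix v assume hv: "v \<in> {v. e \<le> cmod (hh v)}"
      have "v \<in> \<tau> ` K"
      proof (rule ccontr)
        assume "v \<notin> \<tau> ` K"
        then have "hh v = 0" by (rule hh0)
        with hv e show False by simp
      qed
      then show "v \<in> \<tau> ` K \<inter> {v. e \<le> cmod (hh v)}" using hv by (rule IntI)
    next
      fix v assume "v \<in> \<tau> ` K \<inter> {v. e \<le> cmod (hh v)}"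
      then show "v \<in> {v. e \<le> cmod (hh v)}" by (rule IntD2)
    qed
    from compact_Int_closed[OF \<open>compact (\<tau> ` K)\<close> cl] show ?thesis by (simp only: eq[symmetric])
  qed
  then show "exel_L \<tau> k \<in> C0" using chh unfolding eqL by (simp add: C0_def)
qed


lemma ModL_norm_zero: "ModL_norm \<tau> (\<lambda>s. 0) = 0"
proof -
  have "ModL_ip \<tau> (\<lambda>s. 0) (\<lambda>s. 0) = (\<lambda>t. 0)"
    by (simp add: ModL_ip_def exel_L_def)
  moreover have "sup_norm (\<lambda>t::'a. 0::complex) = 0"
    by (simp add: sup_norm_def)
  ultimately show ?thesis by (simp add: ModL_norm_def)
qed

lemma op_dist_zero:
  assumes "\<And>z. z \<in> C0 \<Longrightarrow> ModL_lmul f z = Theta_sum \<tau> F z"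
  shows "op_dist \<tau> f F = 0"
proof -
  have "{ModL_norm \<tau> (\<lambda>s. ModL_lmul f z s - Theta_sum \<tau> F z s) | z. z \<in> C0 \<and> ModL_norm \<tau> z \<le> 1} = {0}"
  proof (intro equalityI subsetI)
    fix a assume "a \<in> {ModL_norm \<tau> (\<lambda>s. ModL_lmul f z s - Theta_sum \<tau> F z s) | z. z \<in> C0 \<and> ModL_norm \<tau> z \<le> 1}"
    then obtain z where z: "z \<in> C0" "a = ModL_norm \<tau> (\<lambda>s. ModL_lmul f z s - Theta_sum \<tau> F z s)" by blast
    have "(\<lambda>s. ModL_lmul f z s - Theta_sum \<tau> F z s) = (\<lambda>s. 0)" using assms[OF z(1)] by simp
    then show "a \<in> {0}" using z(2) ModL_norm_zero by simp
  next
    fix a assume "a \<in> {0::real}"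
    then have a: "a = 0" by simp
    have z0: "(\<lambda>s. 0) \<in> C0" by (rule C0_zero)
    have "(\<lambda>s. ModL_lmul f (\<lambda>s. 0) s - Theta_sum \<tau> F (\<lambda>s. 0) s) = (\<lambda>s. 0)" using assms[OF z0] by simp
    then have e1: "ModL_norm \<tau> (\<lambda>s. ModL_lmul f (\<lambda>s. 0) s - Theta_sum \<tau> F (\<lambda>s. 0) s) = 0"
      using ModL_norm_zero by metis
    have "a = ModL_norm \<tau> (\<lambda>s. ModL_lmul f (\<lambda>s. 0) s - Theta_sum \<tau> F (\<lambda>s. 0) s) \<and> (\<lambda>s. 0) \<in> C0 \<and> ModL_norm \<tau> (\<lambda>s. 0) \<le> 1"
      using a z0 ModL_norm_zero[of \<tau>] e1 by simp
    then show "a \<in> {ModL_norm \<tau> (\<lambda>s. ModL_lmul f z s - Theta_sum \<tau> F z s) | z. z \<in> C0 \<and> ModL_norm \<tau> z \<le> 1}"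
      by blast
  qed
  then show ?thesis by (simp add: op_dist_def)
qed


lemma forward:
  fixes \<tau> :: "'a::t2_space \<Rightarrow> 'a"
    and kM kA :: "('a \<Rightarrow> complex) \<Rightarrow> 'b::cstar_algebra"
  assumes lc: "locally_compact_space (euclidean :: 'a topology)"
    and plh: "proper_local_homeo \<tau>"
    and cov: "CP_covariant \<tau> kM kA"
    and ideal: "cstar_ideal I"
    and tY: "\<forall>f\<in>C0. kA f \<in> I \<longrightarrow> f t = 0"
    and fC: "f \<in> C0" and fI: "kA f \<in> I"
  shows "f (\<tau> t) = 0"
proof -
  have rmul: "\<And>x a. x \<in> C0 \<Longrightarrow> a \<in> C0 \<Longrightarrow> kM (ModL_rmul \<tau> x a) = kM x * kA a"
    using cov unfolding CP_covariant_def by blast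
  have covar: "\<And>f F. f \<in> C0 \<Longrightarrow> (\<forall>n. set (F n) \<subseteq> C0 \<times> C0) \<Longrightarrow> (\<lambda>n. op_dist \<tau> f (F n)) \<longlonglongrightarrow> 0 \<Longrightarrow>
        (\<lambda>n. theta_image kM (F n)) \<longlonglongrightarrow> kA f"
    using cov unfolding CP_covariant_def by blast
  have Il: "\<And>a b. a \<in> I \<Longrightarrow> b * a \<in> I" and Ir: "\<And>a b. a \<in> I \<Longrightarrow> a * b \<in> I"
    using ideal unfolding cstar_ideal_def by blast+
  obtain U g W where UW: "open U" "open (\<tau> ` U)" "homeomorphism U (\<tau> ` U) \<tau> g" "open W" "t \<in> W" "W \<subseteq> U"
    and card: "\<And>s. s \<in> W \<Longrightarrow> card (\<tau> -` {\<tau> s}) = card (\<tau> -` {\<tau> t})"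
    using fiber_local[where t=t, OF lc plh] by blast
  define N where "N = card (\<tau> -` {\<tau> t})"
  have "finite (\<tau> -` {\<tau> t})" using plh by (rule fiber_finite)
  moreover have "t \<in> \<tau> -` {\<tau> t}" by simp
  ultimately have Npos: "N > 0" unfolding N_def using card_gt_0_iff by blast
  have injW: "inj_on \<tau> W" using homeo_inj[OF UW(3)] UW(6) by (rule inj_on_subset)
  obtain w K where wK: "continuous_on UNIV w" "w t = 1" "compact K" "K \<subseteq> W"
    and w0: "\<And>s. s \<notin> K \<Longrightarrow> w s = 0" and wC: "(\<lambda>s. complex_of_real (w s)) \<in> C0"
    using bump[OF lc UW(4) UW(5)] by blast
  define wc where "wc = (\<lambda>s. complex_of_real (w s))"
  have wcC: "wc \<in> C0" using wC by (simp add: wc_def)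
  have fcC: "(\<lambda>s. f (\<tau> s)) \<in> C0" by (rule C0_comp[OF fC plh])
  define x where "x = ModL_rmul \<tau> wc f"
  have x_eq: "x = (\<lambda>s. wc s * f (\<tau> s))" by (simp add: x_def ModL_rmul_def exel_alpha_def)
  have xC: "x \<in> C0" unfolding x_eq by (rule C0_mult[OF wcC fcC])
  define y where "y = (\<lambda>s. of_nat N * wc s)"
  have yC: "y \<in> C0" unfolding y_def by (rule C0_scale[OF wcC])
  define gg where "gg = (\<lambda>s. wc s * x s)"
  have ggC: "gg \<in> C0" unfolding gg_def by (rule C0_mult[OF wcC xC])
  have key: "ModL_lmul gg z = Theta_sum \<tau> [(x, y)] z" for z
  proof
    fix s
    have th: "Theta_sum \<tau> [(x, y)] z s = x s * exel_L \<tau> (\<lambda>u. cnj (y u) * z u) (\<tau> s)"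
      by (simp add: Theta_sum_def Theta_def ModL_rmul_def ModL_ip_def exel_alpha_def)
    show "ModL_lmul gg z s = Theta_sum \<tau> [(x, y)] z s"
    proof (cases "s \<in> W")
      case True
      have cs: "card (\<tau> -` {\<tau> s}) = N" using card[OF True] by (simp add: N_def)
      then have fin: "finite (\<tau> -` {\<tau> s})" using Npos by (intro card_ge_0_finite) simp
      have k0: "cnj (y u) * z u = 0" if "u \<notin> W" for u
      proof -
        have "u \<notin> K" using that wK(4) by blast
        then have "w u = 0" by (rule w0)
        then show ?thesis by (simp add: y_def wc_def)
      qed
      have "(\<Sum>u\<in>\<tau> -` {\<tau> s}. cnj (y u) * z u) = cnj (y s) * z s"
        by (rule sum_fiber_single[OF injW True fin k0])
      then have "exel_L \<tau> (\<lambda>u. cnj (y u) * z u) (\<tau> s) = cnj (y s) * z s / of_nat N"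
        by (simp add: exel_L_def cs)
      also have "\<dots> = wc s * z s" using Npos by (simp add: y_def wc_def)
      finally show ?thesis unfolding th by (simp add: ModL_lmul_def gg_def)
    next
      case False
      then have "s \<notin> K" using wK(4) by blast
      then have "w s = 0" by (rule w0)
      then show ?thesis unfolding th by (simp add: ModL_lmul_def gg_def wc_def x_eq)
    qed
  qed
  have od: "op_dist \<tau> gg [(x, y)] = 0" by (rule op_dist_zero) (rule key)
  have "(\<lambda>n. theta_image kM [(x, y)]) \<longlonglongrightarrow> kA gg"
    using covar[of gg "\<lambda>n. [(x, y)]"] ggC xC yC od by simp
  then have th_eq: "theta_image kM [(x, y)] = kA gg" by (simp add: LIMSEQ_const_iff)
  have "kM x = kM wc * kA f" unfolding x_def by (rule rmul[OF wcC fC])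
  then have "kM x \<in> I" using Il[OF fI] by simp
  then have "kM x * cstar (kM y) \<in> I" by (rule Ir)
  then have "kA gg \<in> I" using th_eq by (simp add: theta_image_def)
  then have "gg t = 0" using tY ggC by blast
  then show ?thesis using wK(2) by (simp add: gg_def x_eq wc_def)
qed


lemma backward:
  fixes \<tau> :: "'a::t2_space \<Rightarrow> 'a"
    and kM kA :: "('a \<Rightarrow> complex) \<Rightarrow> 'b::cstar_algebra"
  assumes lc: "locally_compact_space (euclidean :: 'a topology)"
    and plh: "proper_local_homeo \<tau>"
    and cov: "CP_covariant \<tau> kM kA"
    and ideal: "cstar_ideal I"
    and tY: "\<forall>f\<in>C0. kA f \<in> I \<longrightarrow> f (\<tau> t) = 0"
    and fC: "f \<in> C0" and fI: "kA f \<in> I"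
  shows "f t = 0"
proof -
  have kA_mult: "\<And>f g. f \<in> C0 \<Longrightarrow> g \<in> C0 \<Longrightarrow> kA (\<lambda>t. f t * g t) = kA f * kA g"
    using cov unfolding CP_covariant_def by blast
  have kA_cnj: "\<And>f. f \<in> C0 \<Longrightarrow> kA (\<lambda>t. cnj (f t)) = cstar (kA f)"
    using cov unfolding CP_covariant_def by blast
  have ip: "\<And>x y. x \<in> C0 \<Longrightarrow> y \<in> C0 \<Longrightarrow> cstar (kM x) * kM y = kA (ModL_ip \<tau> x y)"
    using cov unfolding CP_covariant_def by blast
  have lmul: "\<And>a x. a \<in> C0 \<Longrightarrow> x \<in> C0 \<Longrightarrow> kM (ModL_lmul a x) = kA a * kM x"
    using cov unfolding CP_covariant_def by blast
  have Il: "\<And>a b. a \<in> I \<Longrightarrow> b * a \<in> I" and Ir: "\<And>a b. a \<in> I \<Longrightarrow> a * b \<in> I"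
    using ideal unfolding cstar_ideal_def by blast+
  have ct: "continuous_on UNIV \<tau>" using plh by (simp add: proper_local_homeo_def)
  obtain U g W where UW: "open U" "open (\<tau> ` U)" "homeomorphism U (\<tau> ` U) \<tau> g" "open W" "t \<in> W" "W \<subseteq> U"
    and card: "\<And>s. s \<in> W \<Longrightarrow> card (\<tau> -` {\<tau> s}) = card (\<tau> -` {\<tau> t})"
    using fiber_local[where t=t, OF lc plh] by blast
  define N where "N = card (\<tau> -` {\<tau> t})"
  have "finite (\<tau> -` {\<tau> t})" using plh by (rule fiber_finite)
  moreover have "t \<in> \<tau> -` {\<tau> t}" by simp
  ultimately have Npos: "N > 0" unfolding N_def using card_gt_0_iff by blast
  obtain w K where wK: "continuous_on UNIV w" "w t = 1" "compact K" "K \<subseteq> W"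
    and w0: "\<And>s. s \<notin> K \<Longrightarrow> w s = 0" and wC: "(\<lambda>s. complex_of_real (w s)) \<in> C0"
    using bump[OF lc UW(4) UW(5)] by blast
  define wc where "wc = (\<lambda>s. complex_of_real (w s))"
  have wcC: "wc \<in> C0" using wC by (simp add: wc_def)
  define fa where "fa = (\<lambda>s. cnj (f s) * f s)"
  have fcnj: "(\<lambda>s. cnj (f s)) \<in> C0" by (rule C0_cnj[OF fC])
  have faC: "fa \<in> C0" unfolding fa_def by (rule C0_mult[OF fcnj fC])
  have "kA fa = cstar (kA f) * kA f" unfolding fa_def using kA_mult[OF fcnj fC] kA_cnj[OF fC] by simp
  then have faI: "kA fa \<in> I" using Il[OF fI] by simp
  define lm where "lm = ModL_lmul fa wc"
  have lm_eq: "lm = (\<lambda>s. fa s * wc s)" by (simp add: lm_def ModL_lmul_def)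
  have lmC: "lm \<in> C0" unfolding lm_eq by (rule C0_mult[OF faC wcC])
  have "kM lm = kA fa * kM wc" unfolding lm_def by (rule lmul[OF faC wcC])
  then have "kM lm \<in> I" using Ir[OF faI] by simp
  then have "cstar (kM wc) * kM lm \<in> I" by (rule Il)
  then have ipI: "kA (ModL_ip \<tau> wc lm) \<in> I" using ip[OF wcC lmC] by simp
  define k where "k = (\<lambda>s. cnj (wc s) * lm s)"
  have ip_eq: "ModL_ip \<tau> wc lm = exel_L \<tau> k" by (simp add: ModL_ip_def k_def)
  have ck: "continuous_on UNIV k" unfolding k_def
    using wcC lmC by (intro continuous_intros) (simp_all add: C0_def)
  have k0: "k u = 0" if "u \<notin> K" for u using w0[OF that] by (simp add: k_def wc_def)
  have cardN: "card (\<tau> -` {\<tau> s}) = N" if "s \<in> W" for s using card[OF that] by (simp add: N_def)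
  have LC: "exel_L \<tau> k \<in> C0" and Lval: "\<And>s. s \<in> W \<Longrightarrow> exel_L \<tau> k (\<tau> s) = k s / of_nat N"
    using L_local[OF UW(2) UW(3) UW(4) UW(6) cardN Npos ck wK(3) wK(4) k0 ct] by blast+
  have "exel_L \<tau> k (\<tau> t) = 0" using tY LC ipI unfolding ip_eq by blast
  then have "k t = 0" using Lval[OF UW(5)] Npos by simp
  then have "cnj (f t) * f t = 0" using wK(2) by (simp add: k_def lm_eq fa_def wc_def)
  then show ?thesis by simp
qed


theorem lemma7p1:
  fixes \<tau> :: "'a::t2_space \<Rightarrow> 'a"
    and kM kA :: "('a \<Rightarrow> complex) \<Rightarrow> 'b::cstar_algebra"
    and I :: "'b set"
  assumes "locally_compact_space (euclidean :: 'a topology)"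
    and "proper_local_homeo \<tau>"
    and "is_exel_crossed_product TYPE('c::cstar_algebra) \<tau> kM kA"
    and "cstar_ideal I"
  shows "closed {t. \<forall>f\<in>C0. kA f \<in> I \<longrightarrow> f t = 0} \<and>
         tau_invariant \<tau> {t. \<forall>f\<in>C0. kA f \<in> I \<longrightarrow> f t = 0}"
proof -
  have cov: "CP_covariant \<tau> kM kA" using assms(3) unfolding is_exel_crossed_product_def by (elim conjE)
  define Y where "Y = {t. \<forall>f\<in>C0. kA f \<in> I \<longrightarrow> f t = 0}"
  have Yeq: "Y = (\<Inter>f\<in>{f\<in>C0. kA f \<in> I}. {t. f t = 0})" unfolding Y_def by blast
  have "closed {t. f t = 0}" if "f \<in> C0" for f :: "'a \<Rightarrow> complex"
  proof -
    have "continuous_on UNIV f" using that by (simp add: C0_def)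
    then show ?thesis by (rule closed_Collect_eq[OF _ continuous_on_const])
  qed
  then have clY: "closed Y" unfolding Yeq by (intro closed_INT) blast
  have fw: "\<tau> ` Y \<subseteq> Y"
  proof
    fix v assume "v \<in> \<tau> ` Y"
    then obtain t where t: "t \<in> Y" "v = \<tau> t" by blast
    have "\<forall>f\<in>C0. kA f \<in> I \<longrightarrow> f (\<tau> t) = 0"
    proof (intro ballI impI)
      fix f assume "f \<in> C0" "kA f \<in> I"
      show "f (\<tau> t) = 0"
        by (rule forward[OF assms(1) assms(2) cov assms(4) _ \<open>f \<in> C0\<close> \<open>kA f \<in> I\<close>]) (use t(1) in \<open>simp add: Y_def\<close>)
    qed
    then show "v \<in> Y" using t(2) by (simp add: Y_def)
  qed
  have bw: "\<tau> -` Y \<subseteq> Y"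
  proof
    fix t assume "t \<in> \<tau> -` Y"
    then have tY: "\<forall>f\<in>C0. kA f \<in> I \<longrightarrow> f (\<tau> t) = 0" by (simp add: Y_def)
    have "\<forall>f\<in>C0. kA f \<in> I \<longrightarrow> f t = 0"
    proof (intro ballI impI)
      fix f assume "f \<in> C0" "kA f \<in> I"
      show "f t = 0"
        by (rule backward[OF assms(1) assms(2) cov assms(4) tY \<open>f \<in> C0\<close> \<open>kA f \<in> I\<close>])
    qed
    then show "t \<in> Y" by (simp add: Y_def)
  qed
  show ?thesis using clY fw bw unfolding Y_def tau_invariant_def by blast
qed

end
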